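(* Let $\nu\in\mathfrak{M}_L(\mathbb{R}^d)$. Then $\Upsilon^0(\nu)\in\mathfrak{M}_L^1(\mathbb{R}^d)$ if and only if $\nu\in\mathfrak{M}_L^1(\mathbb{R}^d)$.
   Context: A Lévy measure on $\mathbb{R}^d$ is a measure $\nu$ with $\nu(\{0\})=0$ and $\int(1\wedge|x|^2)\nu(\mathrm{d}x)<\infty$; their class is $\mathfrak{M}_L(\mathbb{R}^d)$, and $\mathfrak{M}_L^1(\mathbb{R}^d)$ is the class of those with $\int(1\wedge|x|)\nu(\mathrm{d}x)<\infty$. For $\nu\in\mathfrak{M}_L(\mathbb{R}^d)$, $\Upsilon^0(\nu)(B)=\int_0^\infty\nu(u^{-1}B)e^{-u}\mathrm{d}u$ for Borel $B$, where $u^{-1}B=\{u^{-1}x:x\in B\}$ (this is again in $\mathfrak{M}_L(\mathbb{R}^d)$). *)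

theory Defs
  imports "HOL-Analysis.Analysis"
begin

definition levy_measure :: "'a::euclidean_space measure \<Rightarrow> bool" where
  "levy_measure \<nu> \<longleftrightarrow> sets \<nu> = sets borel \<and> emeasure \<nu> {0} = 0 \<and>
     (\<integral>\<^sup>+ x. ennreal (min 1 (norm x ^ 2)) \<partial>\<nu>) < \<infinity>"

definition levy_measure1 :: "'a::euclidean_space measure \<Rightarrow> bool" where
  "levy_measure1 \<nu> \<longleftrightarrow> levy_measure \<nu> \<and>
     (\<integral>\<^sup>+ x. ennreal (min 1 (norm x)) \<partial>\<nu>) < \<infinity>"

definition Upsilon0 :: "'a::euclidean_space measure \<Rightarrow> 'a measure" where
  "Upsilon0 \<nu> = measure_of UNIV (sets borel)
     (\<lambda>B. \<integral>\<^sup>+ u. indicator {0<..} u * emeasure \<nu> ((\<lambda>x. inverse u *\<^sub>R x) ` B)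
              * ennreal (exp (- u)) \<partial>lborel)"

end

theory Submission imports Defs "HOL-Probability.Distributions" begin

definition wt :: "real \<Rightarrow> ennreal" where "wt u = indicator {0<..} u * ennreal (exp (- u))"

lemma wt_meas[measurable]: "wt \<in> borel_measurable borel"
  unfolding wt_def by measurable

lemma moment: "(\<integral>\<^sup>+u. wt u * ennreal (u^k) \<partial>lborel) = ennreal (real_of_nat (fact k))"
proof -
  have "(\<integral>\<^sup>+u. wt u * ennreal (u^k) \<partial>lborel) = (\<integral>\<^sup>+x. ennreal (x^k * exp (-x)) * indicator {0 ..} x \<partial>lborel)"
    apply (rule nn_integral_cong_AE)
    using AE_lborel_singleton[of 0]
    by eventually_elim (auto simp: wt_def indicator_def ennreal_mult[symmetric] mult.commute)
  then show ?thesis using nn_intergal_power_times_exp_Ici[of k] by simp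
qed

lemma levy_sigma_finite:
  fixes \<nu> :: "'a::euclidean_space measure"
  assumes "levy_measure \<nu>" shows "sigma_finite_measure \<nu>"
proof -
  have sets: "sets \<nu> = sets borel" and z: "emeasure \<nu> {0} = 0"
    and fin: "(\<integral>\<^sup>+ x. ennreal (min 1 (norm x ^ 2)) \<partial>\<nu>) < \<infinity>"
    using assms by (auto simp: levy_measure_def)
  define S where "S n = {x::'a. norm x > 1 / Suc n}" for n
  have Sm: "S n \<in> sets \<nu>" for n unfolding sets S_def by measurable
  have Sf: "emeasure \<nu> (S n) \<noteq> \<infinity>" for n
  proof -
    have "emeasure \<nu> (S n) = (\<integral>\<^sup>+ x. indicator (S n) x \<partial>\<nu>)" using Sm by simp
    also have "\<dots> \<le> (\<integral>\<^sup>+ x. ennreal ((Suc n)^2) * ennreal (min 1 (norm x ^ 2)) \<partial>\<nu>)"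
    proof (rule nn_integral_mono)
      fix x show "indicator (S n) x \<le> ennreal ((Suc n)^2) * ennreal (min 1 (norm x ^ 2))"
      proof (cases "x \<in> S n")
        case True
        then have "1 / Suc n < norm x" by (simp add: S_def)
        then have "1 < Suc n * norm x" by (simp add: field_simps)
        then have "1 \<le> (Suc n * norm x)^2"
          by (metis less_eq_real_def one_le_power)
        moreover have "1 \<le> real ((Suc n)^2)" by simp
        ultimately have "1 \<le> real ((Suc n)^2) * min 1 (norm x ^ 2)"
          by (simp add: power_mult_distrib min_def)
        then show ?thesis using True by (simp add: ennreal_mult[symmetric] del: of_nat_Suc of_nat_power)
      qed simp
    qed
    also have "\<dots> = ennreal ((Suc n)^2) * (\<integral>\<^sup>+ x. ennreal (min 1 (norm x ^ 2)) \<partial>\<nu>)"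
      by (rule nn_integral_cmult) (simp add: measurable_cong_sets[OF sets refl])
    also have "\<dots> < \<infinity>" using fin by (simp add: ennreal_mult_less_top)
    finally show ?thesis by simp
  qed
  show ?thesis
  proof
    show "\<exists>A. countable A \<and> A \<subseteq> sets \<nu> \<and> \<Union> A = space \<nu> \<and> (\<forall>a\<in>A. emeasure \<nu> a \<noteq> \<infinity>)"
    proof (intro exI conjI)
      let ?A = "insert {0} (range S)"
      show "countable ?A" by simp
      show "?A \<subseteq> sets \<nu>" using Sm sets by auto
      show "\<Union> ?A = space \<nu>"
      proof -
        have "x \<in> \<Union> ?A" for x
        proof (cases "x = 0")
          case False
          then have "norm x > 0" by simp
          then obtain n where "inverse (real (Suc n)) < norm x" using reals_Archimedean by blast
          then show ?thesis by (auto simp: S_def field_simps)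
        qed simp
        moreover have "space \<nu> = UNIV" using sets_eq_imp_space_eq[OF sets] by simp
        ultimately show ?thesis by auto
      qed
      show "\<forall>a\<in>?A. emeasure \<nu> a \<noteq> \<infinity>" using Sf z by auto
    qed
  qed
qed

lemma scale_meas:
  fixes \<nu> :: "'a::euclidean_space measure"
  assumes "sets \<nu> = sets borel"
  shows "(\<lambda>z. fst z *\<^sub>R snd z) \<in> (lborel \<Otimes>\<^sub>M \<nu>) \<rightarrow>\<^sub>M (borel :: 'a measure)"
proof -
  have "sets (lborel \<Otimes>\<^sub>M \<nu>) = sets (borel \<Otimes>\<^sub>M (borel::'a measure))"
    by (rule sets_pair_measure_cong) (simp_all add: assms)
  moreover have "(\<lambda>z. fst z *\<^sub>R snd z) \<in> (borel \<Otimes>\<^sub>M (borel::'a measure)) \<rightarrow>\<^sub>M (borel :: 'a measure)"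
    by measurable
  ultimately show ?thesis using measurable_cong_sets by blast
qed

definition Dm :: "'a::euclidean_space measure \<Rightarrow> 'a measure" where
  "Dm \<nu> = distr (density (lborel \<Otimes>\<^sub>M \<nu>) (\<lambda>z. wt (fst z))) borel (\<lambda>z. fst z *\<^sub>R snd z)"

lemma Dm_integral:
  fixes \<nu> :: "'a::euclidean_space measure"
  assumes "levy_measure \<nu>" and f: "f \<in> borel_measurable (borel :: 'a measure)"
  shows "(\<integral>\<^sup>+y. f y \<partial>Dm \<nu>) = (\<integral>\<^sup>+u. \<integral>\<^sup>+x. wt u * f (u *\<^sub>R x) \<partial>\<nu> \<partial>lborel)"
    and "(\<integral>\<^sup>+y. f y \<partial>Dm \<nu>) = (\<integral>\<^sup>+x. \<integral>\<^sup>+u. wt u * f (u *\<^sub>R x) \<partial>lborel \<partial>\<nu>)"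
proof -
  have sets: "sets \<nu> = sets borel" using assms by (simp add: levy_measure_def)
  interpret \<nu>: sigma_finite_measure \<nu> using levy_sigma_finite[OF assms(1)] .
  interpret pair_sigma_finite lborel \<nu> by unfold_locales
  have m: "(\<lambda>z. fst z *\<^sub>R snd z) \<in> (lborel \<Otimes>\<^sub>M \<nu>) \<rightarrow>\<^sub>M (borel :: 'a measure)"
    using scale_meas[OF sets] .
  have wm: "(\<lambda>z. wt (fst z)) \<in> borel_measurable (lborel \<Otimes>\<^sub>M \<nu>)" by measurable
  have fm: "(\<lambda>z. f (fst z *\<^sub>R snd z)) \<in> borel_measurable (lborel \<Otimes>\<^sub>M \<nu>)"
    using measurable_comp[OF m f] by (simp add: comp_def)
  have gm: "(\<lambda>z. wt (fst z) * f (fst z *\<^sub>R snd z)) \<in> borel_measurable (lborel \<Otimes>\<^sub>M \<nu>)"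
    using wm fm by measurable
  have "(\<integral>\<^sup>+y. f y \<partial>Dm \<nu>) = (\<integral>\<^sup>+z. f (fst z *\<^sub>R snd z) \<partial>density (lborel \<Otimes>\<^sub>M \<nu>) (\<lambda>z. wt (fst z)))"
    unfolding Dm_def by (rule nn_integral_distr) (use m f in simp_all)
  also have "\<dots> = (\<integral>\<^sup>+z. wt (fst z) * f (fst z *\<^sub>R snd z) \<partial>(lborel \<Otimes>\<^sub>M \<nu>))"
    by (rule nn_integral_density[OF wm fm])
  finally have eq: "(\<integral>\<^sup>+y. f y \<partial>Dm \<nu>) = (\<integral>\<^sup>+z. wt (fst z) * f (fst z *\<^sub>R snd z) \<partial>(lborel \<Otimes>\<^sub>M \<nu>))" .
  show 1: "(\<integral>\<^sup>+y. f y \<partial>Dm \<nu>) = (\<integral>\<^sup>+u. \<integral>\<^sup>+x. wt u * f (u *\<^sub>R x) \<partial>\<nu> \<partial>lborel)"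
    unfolding eq using \<nu>.nn_integral_fst[OF gm] by simp
  show "(\<integral>\<^sup>+y. f y \<partial>Dm \<nu>) = (\<integral>\<^sup>+x. \<integral>\<^sup>+u. wt u * f (u *\<^sub>R x) \<partial>lborel \<partial>\<nu>)"
    unfolding 1 using Fubini'[of "\<lambda>u x. wt u * f (u *\<^sub>R x)"] gm by (simp add: split_beta')
qed

lemma Ups_eq:
  fixes \<nu> :: "'a::euclidean_space measure"
  assumes L: "levy_measure \<nu>"
  shows "Upsilon0 \<nu> = Dm \<nu>"
proof -
  have sets: "sets \<nu> = sets borel" using assms by (simp add: levy_measure_def)
  have sD: "sets (Dm \<nu>) = sets borel" and spD: "space (Dm \<nu>) = UNIV"
    by (simp_all add: Dm_def)
  have "Upsilon0 \<nu> = measure_of UNIV (sets borel) (emeasure (Dm \<nu>))"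
    unfolding Upsilon0_def
  proof (rule measure_of_eq)
    show "sets borel \<subseteq> Pow UNIV" by simp
    fix a :: "'a set" assume "a \<in> sigma_sets UNIV (sets borel)"
    then have a: "a \<in> sets borel"
      by (metis sets.sigma_sets_eq space_borel)
    have "emeasure (Dm \<nu>) a = (\<integral>\<^sup>+y. indicator a y \<partial>Dm \<nu>)"
      using a sD by simp
    also have "\<dots> = (\<integral>\<^sup>+u. \<integral>\<^sup>+x. wt u * indicator a (u *\<^sub>R x) \<partial>\<nu> \<partial>lborel)"
      by (rule Dm_integral(1)[OF L]) (use a in simp)
    also have "\<dots> = (\<integral>\<^sup>+ u. indicator {0<..} u * emeasure \<nu> ((\<lambda>x. inverse u *\<^sub>R x) ` a)
              * ennreal (exp (- u)) \<partial>lborel)"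
    proof (rule nn_integral_cong)
      fix u :: real
      show "(\<integral>\<^sup>+x. wt u * indicator a (u *\<^sub>R x) \<partial>\<nu>) = indicator {0<..} u * emeasure \<nu> ((\<lambda>x. inverse u *\<^sub>R x) ` a)
              * ennreal (exp (- u))"
      proof (cases "u > 0")
        case True
        have pre: "(\<lambda>x. u *\<^sub>R x) -` a \<in> sets \<nu>"
          unfolding sets by (rule measurable_sets_borel[OF _ a]) measurable
        have img: "(\<lambda>x. inverse u *\<^sub>R x) ` a = (\<lambda>x. u *\<^sub>R x) -` a"
        proof
          show "(\<lambda>x. inverse u *\<^sub>R x) ` a \<subseteq> (\<lambda>x. u *\<^sub>R x) -` a" using True by auto
          show "(\<lambda>x. u *\<^sub>R x) -` a \<subseteq> (\<lambda>x. inverse u *\<^sub>R x) ` a"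
          proof
            fix x assume "x \<in> (\<lambda>x. u *\<^sub>R x) -` a"
            then have "u *\<^sub>R x \<in> a" by simp
            moreover have "x = inverse u *\<^sub>R (u *\<^sub>R x)" using True by simp
            ultimately show "x \<in> (\<lambda>x. inverse u *\<^sub>R x) ` a" by blast
          qed
        qed
        have "(\<integral>\<^sup>+x. wt u * indicator a (u *\<^sub>R x) \<partial>\<nu>) = (\<integral>\<^sup>+x. wt u * indicator ((\<lambda>x. u *\<^sub>R x) -` a) x \<partial>\<nu>)"
          by (simp add: indicator_def)
        also have "\<dots> = wt u * emeasure \<nu> ((\<lambda>x. u *\<^sub>R x) -` a)"
          using pre by (simp add: nn_integral_cmult_indicator)
        finally show ?thesis using True img by (simp add: wt_def mult.commute)
      next
        case False
        then show ?thesis by (simp add: wt_def)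
      qed
    qed
    finally show "(\<integral>\<^sup>+ u. indicator {0<..} u * emeasure \<nu> ((\<lambda>x. inverse u *\<^sub>R x) ` a)
              * ennreal (exp (- u)) \<partial>lborel) = emeasure (Dm \<nu>) a" by simp
  qed
  also have "\<dots> = Dm \<nu>"
    using measure_of_of_measure[of "Dm \<nu>"] sD spD by simp
  finally show ?thesis .
qed

lemma wt_pos: "u > 0 \<Longrightarrow> wt u = ennreal (exp (- u))" by (simp add: wt_def)
lemma wt_npos: "\<not> u > 0 \<Longrightarrow> wt u = 0" by (simp add: wt_def)

lemma moment_c:
  assumes "c \<ge> 0"
  shows "(\<integral>\<^sup>+u. wt u * ennreal (u^k * c) \<partial>lborel) = ennreal c * ennreal (real_of_nat (fact k))"
proof -
  have "(\<integral>\<^sup>+u. wt u * ennreal (u^k * c) \<partial>lborel) = (\<integral>\<^sup>+u. ennreal c * (wt u * ennreal (u^k)) \<partial>lborel)"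
  proof (rule nn_integral_cong)
    fix u :: real show "wt u * ennreal (u^k * c) = ennreal c * (wt u * ennreal (u^k))"
      by (cases "u > 0") (simp_all add: wt_npos ennreal_mult assms mult_ac)
  qed
  also have "\<dots> = ennreal c * (\<integral>\<^sup>+u. wt u * ennreal (u^k) \<partial>lborel)"
    by (rule nn_integral_cmult) measurable
  finally show ?thesis by (simp add: moment)
qed

lemma wt_mono:
  assumes "u > 0 \<Longrightarrow> a \<le> b"
  shows "wt u * ennreal a \<le> wt u * ennreal b"
  by (cases "u > 0") (simp_all add: wt_npos assms mult_left_mono ennreal_leI)

lemma B2:
  fixes x :: "'a::euclidean_space"
  shows "(\<integral>\<^sup>+u. wt u * ennreal (min 1 (norm (u *\<^sub>R x))) \<partial>lborel) \<le> ennreal (min 1 (norm x))"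
proof (cases "norm x \<ge> 1")
  case True
  have "(\<integral>\<^sup>+u. wt u * ennreal (min 1 (norm (u *\<^sub>R x))) \<partial>lborel) \<le> (\<integral>\<^sup>+u. wt u * ennreal (u^0 * 1) \<partial>lborel)"
    by (rule nn_integral_mono, rule wt_mono) simp
  also have "\<dots> = 1" using moment_c[of 1 0] by simp
  finally show ?thesis using True by simp
next
  case False
  have "(\<integral>\<^sup>+u. wt u * ennreal (min 1 (norm (u *\<^sub>R x))) \<partial>lborel) \<le> (\<integral>\<^sup>+u. wt u * ennreal (u^1 * norm x) \<partial>lborel)"
    by (rule nn_integral_mono, rule wt_mono) simp
  also have "\<dots> = ennreal (norm x)" using moment_c[of "norm x" 1] by simp
  finally show ?thesis using False by simp
qed

lemma B1:
  fixes x :: "'a::euclidean_space"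
  shows "(\<integral>\<^sup>+u. wt u * ennreal (min 1 (norm (u *\<^sub>R x) ^ 2)) \<partial>lborel) \<le> 2 * ennreal (min 1 (norm x ^ 2))"
proof (cases "norm x \<ge> 1")
  case True
  have "(\<integral>\<^sup>+u. wt u * ennreal (min 1 (norm (u *\<^sub>R x) ^ 2)) \<partial>lborel) \<le> (\<integral>\<^sup>+u. wt u * ennreal (u^0 * 1) \<partial>lborel)"
    by (rule nn_integral_mono, rule wt_mono) simp
  also have "\<dots> = 1" using moment_c[of 1 0] by simp
  also have "\<dots> \<le> 2 * ennreal (min 1 (norm x ^ 2))" using True
    by (simp add: min_def one_le_power)
  finally show ?thesis .
next
  case False
  have "(\<integral>\<^sup>+u. wt u * ennreal (min 1 (norm (u *\<^sub>R x) ^ 2)) \<partial>lborel) \<le> (\<integral>\<^sup>+u. wt u * ennreal (u^2 * norm x ^ 2) \<partial>lborel)"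
    by (rule nn_integral_mono, rule wt_mono) (simp add: power_mult_distrib)
  also have "\<dots> = ennreal (norm x ^ 2) * 2" by (simp add: moment_c)
  finally have le: "(\<integral>\<^sup>+u. wt u * ennreal (min 1 (norm (u *\<^sub>R x) ^ 2)) \<partial>lborel) \<le> ennreal (norm x ^ 2) * 2" .
  have "min 1 (norm x ^ 2) = norm x ^ 2" using False by (simp add: power_le_one)
  then show ?thesis using le by (simp only: mult.commute)
qed

lemma B3:
  fixes x :: "'a::euclidean_space"
  shows "ennreal (exp (-2) * min 1 (norm x)) \<le> (\<integral>\<^sup>+u. wt u * ennreal (min 1 (norm (u *\<^sub>R x))) \<partial>lborel)"
proof -
  have "ennreal (exp (-2) * min 1 (norm x)) = (\<integral>\<^sup>+u. ennreal (exp (-2) * min 1 (norm x)) * indicator {1..2::real} u \<partial>lborel)"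
    by (simp add: nn_integral_cmult_indicator)
  also have "\<dots> \<le> (\<integral>\<^sup>+u. wt u * ennreal (min 1 (norm (u *\<^sub>R x))) \<partial>lborel)"
  proof (rule nn_integral_mono)
    fix u :: real
    show "ennreal (exp (-2) * min 1 (norm x)) * indicator {1..2::real} u \<le> wt u * ennreal (min 1 (norm (u *\<^sub>R x)))"
    proof (cases "u \<in> {1..2}")
      case True
      then have u: "1 \<le> u" "u \<le> 2" by auto
      have "exp (-2) * min 1 (norm x) \<le> exp (- u) * min 1 (norm (u *\<^sub>R x))"
      proof (rule mult_mono)
        show "exp (-2) \<le> exp (- u)" using u by simp
        have "norm x \<le> u * norm x" using u by (simp add: mult_le_cancel_right1)
        then show "min 1 (norm x) \<le> min 1 (norm (u *\<^sub>R x))" using u by auto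
      qed auto
      then show ?thesis using True u by (simp add: wt_pos ennreal_mult[symmetric] ennreal_leI)
    qed simp
  qed
  finally show ?thesis .
qed

lemma B0:
  fixes x :: "'a::euclidean_space"
  shows "(\<integral>\<^sup>+u. wt u * indicator {0} (u *\<^sub>R x) \<partial>lborel) \<le> indicator {0} x"
proof -
  have "(\<integral>\<^sup>+u. wt u * indicator {0} (u *\<^sub>R x) \<partial>lborel) = (\<integral>\<^sup>+u. wt u * ennreal (u^0 * indicator {0} x) \<partial>lborel)"
  proof (rule nn_integral_cong)
    fix u :: real show "wt u * indicator {0} (u *\<^sub>R x) = wt u * ennreal (u^0 * indicator {0} x)"
      by (cases "u > 0") (auto simp: wt_npos indicator_def)
  qed
  also have "\<dots> = indicator {0} x" using moment_c[of "indicator {0} x" 0] by (cases "x = 0") simp_all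
  finally show ?thesis by simp
qed

theorem proposition3p3:
  fixes \<nu> :: "'a::euclidean_space measure"
  assumes "levy_measure \<nu>"
  shows "levy_measure1 (Upsilon0 \<nu>) \<longleftrightarrow> levy_measure1 \<nu>"
proof -
  have sets[measurable_cong]: "sets \<nu> = sets borel" and z: "emeasure \<nu> {0} = 0"
    and fin: "(\<integral>\<^sup>+ x. ennreal (min 1 (norm x ^ 2)) \<partial>\<nu>) < \<infinity>"
    using assms by (auto simp: levy_measure_def)
  have U: "Upsilon0 \<nu> = Dm \<nu>" using Ups_eq[OF assms] .
  have sU: "sets (Upsilon0 \<nu>) = sets borel" by (simp add: U Dm_def)
  have U0: "emeasure (Upsilon0 \<nu>) {0} = 0"
  proof -
    have "emeasure (Upsilon0 \<nu>) {0} = (\<integral>\<^sup>+y. indicator {0} y \<partial>Dm \<nu>)"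
      using sU by (simp add: U)
    also have "\<dots> = (\<integral>\<^sup>+x. \<integral>\<^sup>+u. wt u * indicator {0} (u *\<^sub>R x) \<partial>lborel \<partial>\<nu>)"
      by (rule Dm_integral(2)[OF assms]) simp
    also have "\<dots> \<le> (\<integral>\<^sup>+x. indicator {0} x \<partial>\<nu>)"
      by (rule nn_integral_mono) (rule B0)
    also have "\<dots> = 0" using z sets by simp
    finally show ?thesis by simp
  qed
  have U2: "(\<integral>\<^sup>+ y. ennreal (min 1 (norm y ^ 2)) \<partial>Upsilon0 \<nu>) < \<infinity>"
  proof -
    have "(\<integral>\<^sup>+ y. ennreal (min 1 (norm y ^ 2)) \<partial>Upsilon0 \<nu>)
        = (\<integral>\<^sup>+x. \<integral>\<^sup>+u. wt u * ennreal (min 1 (norm (u *\<^sub>R x) ^ 2)) \<partial>lborel \<partial>\<nu>)"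
      unfolding U by (rule Dm_integral(2)[OF assms]) measurable
    also have "\<dots> \<le> (\<integral>\<^sup>+x. 2 * ennreal (min 1 (norm x ^ 2)) \<partial>\<nu>)"
      by (rule nn_integral_mono) (rule B1)
    also have "\<dots> = 2 * (\<integral>\<^sup>+x. ennreal (min 1 (norm x ^ 2)) \<partial>\<nu>)"
      by (rule nn_integral_cmult) measurable
    also have "\<dots> < \<infinity>" using fin by (simp add: ennreal_mult_less_top)
    finally show ?thesis .
  qed
  have LU: "levy_measure (Upsilon0 \<nu>)" using sU U0 U2 by (simp add: levy_measure_def)
  have I1: "(\<integral>\<^sup>+ y. ennreal (min 1 (norm y)) \<partial>Upsilon0 \<nu>)
        = (\<integral>\<^sup>+x. \<integral>\<^sup>+u. wt u * ennreal (min 1 (norm (u *\<^sub>R x))) \<partial>lborel \<partial>\<nu>)"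
    unfolding U by (rule Dm_integral(2)[OF assms]) measurable
  show ?thesis
  proof
    assume "levy_measure1 (Upsilon0 \<nu>)"
    then have "(\<integral>\<^sup>+ y. ennreal (min 1 (norm y)) \<partial>Upsilon0 \<nu>) < \<infinity>"
      by (simp add: levy_measure1_def)
    moreover have "ennreal (exp (-2)) * (\<integral>\<^sup>+x. ennreal (min 1 (norm x)) \<partial>\<nu>)
        = (\<integral>\<^sup>+x. ennreal (exp (-2) * min 1 (norm x)) \<partial>\<nu>)"
      by (subst nn_integral_cmult[symmetric]) (simp_all add: ennreal_mult)
    moreover have "\<dots> \<le> (\<integral>\<^sup>+x. \<integral>\<^sup>+u. wt u * ennreal (min 1 (norm (u *\<^sub>R x))) \<partial>lborel \<partial>\<nu>)"
      by (rule nn_integral_mono) (rule B3)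
    ultimately have "ennreal (exp (-2)) * (\<integral>\<^sup>+x. ennreal (min 1 (norm x)) \<partial>\<nu>) < \<infinity>"
      using I1 by (metis order.strict_trans1)
    then have "(\<integral>\<^sup>+x. ennreal (min 1 (norm x)) \<partial>\<nu>) < \<infinity>"
      by (auto simp add: ennreal_mult_less_top)
    then show "levy_measure1 \<nu>" using assms by (simp add: levy_measure1_def)
  next
    assume "levy_measure1 \<nu>"
    then have f1: "(\<integral>\<^sup>+x. ennreal (min 1 (norm x)) \<partial>\<nu>) < \<infinity>"
      by (simp add: levy_measure1_def)
    have "(\<integral>\<^sup>+x. \<integral>\<^sup>+u. wt u * ennreal (min 1 (norm (u *\<^sub>R x))) \<partial>lborel \<partial>\<nu>)
        \<le> (\<integral>\<^sup>+x. ennreal (min 1 (norm x)) \<partial>\<nu>)"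
      by (rule nn_integral_mono) (rule B2)
    then have "(\<integral>\<^sup>+ y. ennreal (min 1 (norm y)) \<partial>Upsilon0 \<nu>) < \<infinity>"
      using I1 f1 by (metis order.strict_trans1)
    then show "levy_measure1 (Upsilon0 \<nu>)" using LU by (simp add: levy_measure1_def)
  qed
qed

end
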